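(* Let $\Sigma=\{a,b,c\}$ and let $\mathfrak{A}$ be the architecture with $\mathsf{Procs}=\{p_1,p_2\}$, $\mathsf{DS}=\mathsf{Queues}=\{c_1,c_2\}$ (no stacks, no bags), $\mathsf{Writer}(c_1)=\mathsf{Reader}(c_2)=p_1$ and $\mathsf{Writer}(c_2)=\mathsf{Reader}(c_1)=p_2$. There is a sentence $\varphi\in\mathsf{MSO}(\mathfrak{A},\Sigma)$ such that for every CPDS $\mathcal{S}$ over $\mathfrak{A}$ and $\Sigma$ we have $L(\mathcal{S})\neq L(\varphi)$.
   Context: An architecture is $\mathfrak{A}=(\mathsf{Procs},\mathsf{DS},\mathsf{Writer},\mathsf{Reader})$ with $\mathsf{DS}=\mathsf{Stacks}\uplus\mathsf{Queues}\uplus\mathsf{Bags}$ and $\mathsf{Writer},\mathsf{Reader}:\mathsf{DS}\to\mathsf{Procs}$. A CBM over $\mathfrak{A}$ and $\Sigma$ is $\mathcal{M}=((w_p)_{p\in\mathsf{Procs}},(\rhd^d)_{d\in\mathsf{DS}})$ with $w_p\in\Sigma^*$; events $\mathcal{E}=\bigcup_p\{(p,i)\mid1\le i\le|w_p|\}$, process successor $(p,i)\to(p,i+1)$, $\mathsf{pid}((p,i))=p$, $\lambda((p,i))$ the $i$-th letter of $w_p$; $\rhd^d\subseteq\mathcal{E}_{\mathsf{Writer}(d)}\times\mathcal{E}_{\mathsf{Reader}(d)}$ such that distinct edges (over all $d$) have four distinct endpoints, $<=(\to\cup\bigcup_d\rhd^d)^+$ is a strict partial order, and for each queue $d$, $e_1\rhd^d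 f_1$, $e_2\rhd^d f_2$, $e_1<e_2$ imply $f_1<f_2$ (and for stacks, $e_1<e_2<f_1$ implies $f_2<f_1$). A CPDS $\mathcal{S}=(\mathsf{Locs},\mathsf{Val},(\to_p)_p,\ell_{in},\mathsf{Fin})$ has nonempty finite $\mathsf{Locs},\mathsf{Val}$, $\ell_{in}\in\mathsf{Locs}$, $\mathsf{Fin}\subseteq\mathsf{Locs}^{\mathsf{Procs}}$ and finite transition sets $\to_p$ with transitions $\ell\xrightarrow{a}_p\ell'$, $\ell\xrightarrow{a,d!v}_p\ell'$ ($\mathsf{Writer}(d)=p$), $\ell\xrightarrow{a,d?v}_p\ell'$ ($\mathsf{Reader}(d)=p$). A run on a CBM is $\rho:\mathcal{E}\to\mathsf{Locs}$ such that, with $\rho^-(e)$ the value of $\rho$ at the $\to$-predecessor of $e$ or $\ell_{in}$ if none: events incident to no $\rhd$-edge use an internal transition $\rho^-(e)\xrightarrow{\lambda(e)}_{\mathsf{pid}(e)}\rho(e)$, and for each $e\rhd^d f$ some $v$ gives transitions $\rho^-(e)\xrightarrow{\lambda(e),d!v}\rho(e)$ and $\rho^-(f)\xrightarrow{\lambda(f),d?v}\rho(f)$. It is accepting if the tuple of last locations of each process ($\ell_{in}$ for processes with no events) is in $\mathsf{Fin}$. $L(\mathcal{S})$ = CBMs with an accepting run. $\mathsf{MSO}(\mathfrak{A},\Sigma)$: $\varphi::=a(x)\mid p(x)\mid x=y\mid x\rhd^d y\mid x\to y\mid x\in X\mid\varphi\vee\varphi\mid\neg\varphi\mid\exists x\varphi\mid\exists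 X\varphi$, interpreted over CBMs in the standard way ($a(x)$: $\lambda(x)=a$; $p(x)$: $\mathsf{pid}(x)=p$). $L(\varphi)$ is the set of CBMs satisfying sentence $\varphi$. *)

theory Defs
  imports Main
begin

datatype proc = P1 | P2
datatype ds = C1 | C2   (* both data structures are queues *)
datatype sym = A | B | C

fun writer :: "ds \<Rightarrow> proc" where
  "writer C1 = P1" | "writer C2 = P2"
fun reader :: "ds \<Rightarrow> proc" where
  "reader C1 = P2" | "reader C2 = P1"

type_synonym event = "proc \<times> nat"   (* (p,i) with 1 <= i <= |w_p| *)

type_synonym cbm = "(proc \<Rightarrow> sym list) \<times> (ds \<Rightarrow> (event \<times> event) set)"

definition words :: "cbm \<Rightarrow> proc \<Rightarrow> sym list" where "words M = fst M"
definition edges :: "cbm \<Rightarrow> ds \<Rightarrow> (event \<times> event) set" where "edges M = snd M"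

definition events :: "cbm \<Rightarrow> event set" where
  "events M = {(p,i). 1 \<le> i \<and> i \<le> length (words M p)}"

definition events_of :: "cbm \<Rightarrow> proc \<Rightarrow> event set" where
  "events_of M p = {e \<in> events M. fst e = p}"

definition lab :: "cbm \<Rightarrow> event \<Rightarrow> sym" where
  "lab M e = words M (fst e) ! (snd e - 1)"

definition proc_succ :: "cbm \<Rightarrow> (event \<times> event) set" where
  "proc_succ M = {(e,f). e \<in> events M \<and> f \<in> events M \<and> fst f = fst e \<and> snd f = snd e + 1}"

definition cbm_less :: "cbm \<Rightarrow> (event \<times> event) set" where
  "cbm_less M = (proc_succ M \<union> (\<Union>d. edges M d))\<^sup>+"

definition is_cbm :: "cbm \<Rightarrow> bool" where
  "is_cbm M \<longleftrightarrow>
     (\<forall>d. edges M d \<subseteq> events_of M (writer d) \<times> events_of M (reader d)) \<and>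
     (\<forall>d d' e f e' f'. (e,f) \<in> edges M d \<and> (e',f') \<in> edges M d' \<and> (d,e,f) \<noteq> (d',e',f')
        \<longrightarrow> e \<noteq> e' \<and> e \<noteq> f' \<and> f \<noteq> e' \<and> f \<noteq> f') \<and>
     (\<forall>e. (e,e) \<notin> cbm_less M) \<and>
     (\<forall>d e1 f1 e2 f2. (e1,f1) \<in> edges M d \<and> (e2,f2) \<in> edges M d \<and> (e1,e2) \<in> cbm_less M
        \<longrightarrow> (f1,f2) \<in> cbm_less M)"

text \<open>Locations and values are represented by natural numbers; Locs and Val are
  finite nonempty sets of naturals (every finite set is in bijection with such a set).\<close>

datatype act = Internal | Send ds nat | Recv ds nat

type_synonym transition = "nat \<times> sym \<times> act \<times> nat"

record cpds =
  locs :: "nat set"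
  vals :: "nat set"
  trans :: "proc \<Rightarrow> transition set"
  init :: nat
  fin :: "(proc \<Rightarrow> nat) set"

definition is_cpds :: "cpds \<Rightarrow> bool" where
  "is_cpds S \<longleftrightarrow>
     finite (locs S) \<and> locs S \<noteq> {} \<and> finite (vals S) \<and> vals S \<noteq> {} \<and>
     init S \<in> locs S \<and> fin S \<subseteq> {f. \<forall>p. f p \<in> locs S} \<and>
     (\<forall>p. finite (trans S p)) \<and>
     (\<forall>p l a act l'. (l,a,act,l') \<in> trans S p \<longrightarrow>
        l \<in> locs S \<and> l' \<in> locs S \<and>
        (\<forall>d v. act = Send d v \<longrightarrow> writer d = p \<and> v \<in> vals S) \<and>
        (\<forall>d v. act = Recv d v \<longrightarrow> reader d = p \<and> v \<in> vals S))"

definition pre_loc :: "cpds \<Rightarrow> (event \<Rightarrow> nat) \<Rightarrow> event \<Rightarrow> nat" where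
  "pre_loc S \<rho> e = (if snd e = 1 then init S else \<rho> (fst e, snd e - 1))"

definition is_run :: "cpds \<Rightarrow> cbm \<Rightarrow> (event \<Rightarrow> nat) \<Rightarrow> bool" where
  "is_run S M \<rho> \<longleftrightarrow>
     (\<forall>e \<in> events M. \<rho> e \<in> locs S) \<and>
     (\<forall>e \<in> events M. (\<nexists>d f. (e,f) \<in> edges M d \<or> (f,e) \<in> edges M d) \<longrightarrow>
        (pre_loc S \<rho> e, lab M e, Internal, \<rho> e) \<in> trans S (fst e)) \<and>
     (\<forall>d e f. (e,f) \<in> edges M d \<longrightarrow>
        (\<exists>v. (pre_loc S \<rho> e, lab M e, Send d v, \<rho> e) \<in> trans S (fst e) \<and>
             (pre_loc S \<rho> f, lab M f, Recv d v, \<rho> f) \<in> trans S (fst f)))"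

definition accepting :: "cpds \<Rightarrow> cbm \<Rightarrow> (event \<Rightarrow> nat) \<Rightarrow> bool" where
  "accepting S M \<rho> \<longleftrightarrow>
     (\<lambda>p. if words M p = [] then init S else \<rho> (p, length (words M p))) \<in> fin S"

definition lang_cpds :: "cpds \<Rightarrow> cbm set" where
  "lang_cpds S = {M. is_cbm M \<and> (\<exists>\<rho>. is_run S M \<rho> \<and> accepting S M \<rho>)}"

text \<open>First-order and second-order variables are natural numbers (separate name spaces).\<close>

datatype mso =
    Lab sym nat
  | Pid proc nat
  | Eq nat nat
  | Edge ds nat nat
  | Succ nat nat
  | Mem nat nat
  | Or mso mso
  | Neg mso
  | Ex1 nat mso
  | Ex2 nat mso

primrec fv1 :: "mso \<Rightarrow> nat set" where
  "fv1 (Lab a x) = {x}"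
| "fv1 (Pid p x) = {x}"
| "fv1 (Eq x y) = {x, y}"
| "fv1 (Edge d x y) = {x, y}"
| "fv1 (Succ x y) = {x, y}"
| "fv1 (Mem x X) = {x}"
| "fv1 (Or \<phi> \<psi>) = fv1 \<phi> \<union> fv1 \<psi>"
| "fv1 (Neg \<phi>) = fv1 \<phi>"
| "fv1 (Ex1 x \<phi>) = fv1 \<phi> - {x}"
| "fv1 (Ex2 X \<phi>) = fv1 \<phi>"

primrec fv2 :: "mso \<Rightarrow> nat set" where
  "fv2 (Lab a x) = {}"
| "fv2 (Pid p x) = {}"
| "fv2 (Eq x y) = {}"
| "fv2 (Edge d x y) = {}"
| "fv2 (Succ x y) = {}"
| "fv2 (Mem x X) = {X}"
| "fv2 (Or \<phi> \<psi>) = fv2 \<phi> \<union> fv2 \<psi>"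
| "fv2 (Neg \<phi>) = fv2 \<phi>"
| "fv2 (Ex1 x \<phi>) = fv2 \<phi>"
| "fv2 (Ex2 X \<phi>) = fv2 \<phi> - {X}"

definition sentence :: "mso \<Rightarrow> bool" where
  "sentence \<phi> \<longleftrightarrow> fv1 \<phi> = {} \<and> fv2 \<phi> = {}"

primrec sat :: "cbm \<Rightarrow> (nat \<Rightarrow> event) \<Rightarrow> (nat \<Rightarrow> event set) \<Rightarrow> mso \<Rightarrow> bool" where
  "sat M \<nu> \<mu> (Lab a x) = (lab M (\<nu> x) = a)"
| "sat M \<nu> \<mu> (Pid p x) = (fst (\<nu> x) = p)"
| "sat M \<nu> \<mu> (Eq x y) = (\<nu> x = \<nu> y)"
| "sat M \<nu> \<mu> (Edge d x y) = ((\<nu> x, \<nu> y) \<in> edges M d)"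
| "sat M \<nu> \<mu> (Succ x y) = ((\<nu> x, \<nu> y) \<in> proc_succ M)"
| "sat M \<nu> \<mu> (Mem x X) = (\<nu> x \<in> \<mu> X)"
| "sat M \<nu> \<mu> (Or \<phi> \<psi>) = (sat M \<nu> \<mu> \<phi> \<or> sat M \<nu> \<mu> \<psi>)"
| "sat M \<nu> \<mu> (Neg \<phi>) = (\<not> sat M \<nu> \<mu> \<phi>)"
| "sat M \<nu> \<mu> (Ex1 x \<phi>) = (\<exists>e \<in> events M. sat M (\<nu>(x := e)) \<mu> \<phi>)"
| "sat M \<nu> \<mu> (Ex2 X \<phi>) = (\<exists>E \<subseteq> events M. sat M \<nu> (\<mu>(X := E)) \<phi>)"

definition lang_mso :: "mso \<Rightarrow> cbm set" where
  "lang_mso \<phi> = {M. is_cbm M \<and> (\<forall>\<nu> \<mu>. sat M \<nu> \<mu> \<phi>)}"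

end

theory Submission
  imports Defs "HOL-Library.FuncSet"
begin


definition mAnd :: "mso \<Rightarrow> mso \<Rightarrow> mso" where "mAnd a b = Neg (Or (Neg a) (Neg b))"
definition mImp :: "mso \<Rightarrow> mso \<Rightarrow> mso" where "mImp a b = Or (Neg a) b"
definition mAll1 :: "nat \<Rightarrow> mso \<Rightarrow> mso" where "mAll1 x a = Neg (Ex1 x (Neg a))"
definition mAll2 :: "nat \<Rightarrow> mso \<Rightarrow> mso" where "mAll2 x a = Neg (Ex2 x (Neg a))"
definition mIff :: "mso \<Rightarrow> mso \<Rightarrow> mso" where "mIff a b = mAnd (mImp a b) (mImp b a)"

lemma sat_mac[simp]:
  "sat M \<nu> \<mu> (mAnd a b) = (sat M \<nu> \<mu> a \<and> sat M \<nu> \<mu> b)"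
  "sat M \<nu> \<mu> (mImp a b) = (sat M \<nu> \<mu> a \<longrightarrow> sat M \<nu> \<mu> b)"
  "sat M \<nu> \<mu> (mIff a b) = (sat M \<nu> \<mu> a \<longleftrightarrow> sat M \<nu> \<mu> b)"
  "sat M \<nu> \<mu> (mAll1 x a) = (\<forall>e\<in>events M. sat M (\<nu>(x:=e)) \<mu> a)"
  "sat M \<nu> \<mu> (mAll2 X a) = (\<forall>E. E \<subseteq> events M \<longrightarrow> sat M \<nu> (\<mu>(X:=E)) a)"
  by (auto simp: mAnd_def mImp_def mIff_def mAll1_def mAll2_def)

lemma fv_mac[simp]:
  "fv1 (mAnd a b) = fv1 a \<union> fv1 b" "fv2 (mAnd a b) = fv2 a \<union> fv2 b"
  "fv1 (mImp a b) = fv1 a \<union> fv1 b" "fv2 (mImp a b) = fv2 a \<union> fv2 b"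
  "fv1 (mIff a b) = fv1 a \<union> fv1 b" "fv2 (mIff a b) = fv2 a \<union> fv2 b"
  "fv1 (mAll1 x a) = fv1 a - {x}" "fv2 (mAll1 x a) = fv2 a"
  "fv1 (mAll2 X a) = fv1 a" "fv2 (mAll2 X a) = fv2 a - {X}"
  by (auto simp: mAnd_def mImp_def mIff_def mAll1_def mAll2_def)

definition tc :: "mso \<Rightarrow> nat \<Rightarrow> nat \<Rightarrow> mso" where
  "tc st a b = mAll2 0 (mImp (mAnd (Mem a 0) (mAll1 4 (mAll1 5 (mImp (mAnd (Mem 4 0) st) (Mem 5 0))))) (Mem b 0))"

definition stV :: mso where
  "stV = Ex1 6 (mAnd (Or (Edge C1 4 6) (Edge C2 4 6)) (Succ 6 5))"
definition stH :: mso where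
  "stH = Ex1 6 (mAnd (Succ 4 6) (mAnd (Succ 6 5) (Neg (Lab B 6))))"

definition RV :: "cbm \<Rightarrow> event \<Rightarrow> event \<Rightarrow> bool" where
  "RV M e1 e2 = (\<exists>m\<in>events M. ((e1,m) \<in> edges M C1 \<or> (e1,m) \<in> edges M C2) \<and> (m,e2) \<in> proc_succ M)"
definition RH :: "cbm \<Rightarrow> event \<Rightarrow> event \<Rightarrow> bool" where
  "RH M e1 e2 = (\<exists>m\<in>events M. (e1,m) \<in> proc_succ M \<and> (m,e2) \<in> proc_succ M \<and> lab M m \<noteq> B)"

lemma sat_stV: "sat M \<nu> \<mu> stV = RV M (\<nu> 4) (\<nu> 5)"
  by (simp add: stV_def RV_def)
lemma sat_stH: "sat M \<nu> \<mu> stH = RH M (\<nu> 4) (\<nu> 5)"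
  by (simp add: stH_def RH_def)

definition relOn :: "cbm \<Rightarrow> (event \<Rightarrow> event \<Rightarrow> bool) \<Rightarrow> (event \<times> event) set" where
  "relOn M R = {(e1,e2). e1 \<in> events M \<and> e2 \<in> events M \<and> R e1 e2}"

lemma sat_tc:
  assumes st: "\<And>\<nu> \<mu>. sat M \<nu> \<mu> st = R (\<nu> 4) (\<nu> 5)"
    and a: "a \<noteq> 4" "a \<noteq> 5" and b: "b \<noteq> 4" "b \<noteq> 5" and ev: "\<nu> a \<in> events M"
  shows "sat M \<nu> \<mu> (tc st a b) = ((\<nu> a, \<nu> b) \<in> (relOn M R)\<^sup>*)"
proof -
  have "sat M \<nu> \<mu> (tc st a b) = (\<forall>E. E \<subseteq> events M \<longrightarrow> \<nu> a \<in> E \<and>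
      (\<forall>e1\<in>events M. \<forall>e2\<in>events M. e1 \<in> E \<and> R e1 e2 \<longrightarrow> e2 \<in> E) \<longrightarrow> \<nu> b \<in> E)"
    using a b by (simp add: tc_def st)
  also have "\<dots> = ((\<nu> a, \<nu> b) \<in> (relOn M R)\<^sup>*)"
  proof
    assume H: "\<forall>E. E \<subseteq> events M \<longrightarrow> \<nu> a \<in> E \<and>
      (\<forall>e1\<in>events M. \<forall>e2\<in>events M. e1 \<in> E \<and> R e1 e2 \<longrightarrow> e2 \<in> E) \<longrightarrow> \<nu> b \<in> E"
    let ?E = "{e. e \<in> events M \<and> (\<nu> a, e) \<in> (relOn M R)\<^sup>*}"
    have "\<nu> b \<in> ?E"
      apply (rule H[rule_format])
      using ev by (auto simp: relOn_def intro: rtrancl_into_rtrancl)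
    then show "(\<nu> a, \<nu> b) \<in> (relOn M R)\<^sup>*" by simp
  next
    assume "(\<nu> a, \<nu> b) \<in> (relOn M R)\<^sup>*"
    then show "\<forall>E. E \<subseteq> events M \<longrightarrow> \<nu> a \<in> E \<and>
      (\<forall>e1\<in>events M. \<forall>e2\<in>events M. e1 \<in> E \<and> R e1 e2 \<longrightarrow> e2 \<in> E) \<longrightarrow> \<nu> b \<in> E"
      by (induction rule: rtrancl_induct) (auto simp: relOn_def)
  qed
  finally show ?thesis .
qed

definition rel :: "mso \<Rightarrow> nat \<Rightarrow> nat \<Rightarrow> mso" where
  "rel st a b = Or (tc st a b) (tc st b a)"

definition phi :: mso where
  "phi = Neg (Ex1 0 (Ex1 1 (Ex1 2 (Ex1 3
     (mAnd (Or (Lab A 0) (Lab B 0)) (mAnd (Or (Lab A 1) (Lab B 1))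
     (mAnd (Lab C 2) (mAnd (Lab C 3)
     (mAnd (rel stV 0 2) (mAnd (rel stH 1 2) (mAnd (rel stV 1 3) (mAnd (rel stH 0 3)
     (Neg (mIff (Lab A 0) (Lab A 1)))))))))))))))"

lemma sentence_phi: "sentence phi"
  by (auto simp: sentence_def phi_def rel_def tc_def stV_def stH_def)

lemma sat_phi: "sat M \<nu> \<mu> phi = (\<not> (\<exists>x\<in>events M. \<exists>y\<in>events M. \<exists>z\<in>events M. \<exists>z'\<in>events M.
   (lab M x = A \<or> lab M x = B) \<and> (lab M y = A \<or> lab M y = B) \<and> lab M z = C \<and> lab M z' = C \<and>
   ((x,z) \<in> (relOn M (RV M))\<^sup>* \<or> (z,x) \<in> (relOn M (RV M))\<^sup>*) \<and>
   ((y,z) \<in> (relOn M (RH M))\<^sup>* \<or> (z,y) \<in> (relOn M (RH M))\<^sup>*) \<and>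
   ((y,z') \<in> (relOn M (RV M))\<^sup>* \<or> (z',y) \<in> (relOn M (RV M))\<^sup>*) \<and>
   ((x,z') \<in> (relOn M (RH M))\<^sup>* \<or> (z',x) \<in> (relOn M (RH M))\<^sup>*) \<and>
   \<not> (lab M x = A \<longleftrightarrow> lab M y = A)))"
  unfolding phi_def rel_def
  by (simp add: sat_tc[OF sat_stV] sat_tc[OF sat_stH])


definition gL :: "nat \<Rightarrow> nat" where "gL h = 2*h*(8*h)"

definition lblD :: "nat \<Rightarrow> (nat \<Rightarrow> nat \<Rightarrow> sym) \<Rightarrow> proc \<Rightarrow> nat \<Rightarrow> sym" where
  "lblD h D p n = (let q = n - 1; t = q div (8*h); w = q mod (8*h); j = w div 2;
      r = 2*t + (if p = P1 then 0 else 1) in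
      if even w then (if j = 0 then B else A) else (if r = j then C else D r j))"

definition gE :: "nat \<Rightarrow> ds \<Rightarrow> (event \<times> event) set" where
  "gE h d = (case d of
     C1 \<Rightarrow> {((P1,n),(P2,n-1)) | n. even n \<and> 2 \<le> n \<and> n \<le> gL h}
   | C2 \<Rightarrow> {((P2,n),(P1,n+8*h-1)) | n. even n \<and> 2 \<le> n \<and> n + 8*h \<le> gL h})"

definition grid :: "nat \<Rightarrow> (nat \<Rightarrow> nat \<Rightarrow> sym) \<Rightarrow> cbm" where
  "grid h D = (\<lambda>p. map (lblD h D p) [1..<gL h+1], gE h)"

lemma words_grid: "words (grid h D) p = map (lblD h D p) [1..<gL h+1]"
  by (simp add: words_def grid_def)
lemma edges_grid[simp]: "edges (grid h D) = gE h"
  by (simp add: edges_def grid_def)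
lemma events_grid: "events (grid h D) = {(p,n). 1 \<le> n \<and> n \<le> gL h}"
  by (auto simp: events_def words_grid)
lemma lab_grid: "1 \<le> n \<Longrightarrow> n \<le> gL h \<Longrightarrow> lab (grid h D) (p,n) = lblD h D p n"
  by (simp del: upt_Suc add: lab_def words_grid nth_map)
lemma proc_succ_grid: "proc_succ (grid h D) = {((p,n),(p,n+1)) | p n. 1 \<le> n \<and> n + 1 \<le> gL h}"
  by (auto simp: proc_succ_def events_grid)

lemma UN_ds: "(\<Union>d. f d) = f C1 \<union> f C2"
proof
  show "(\<Union>d. f d) \<subseteq> f C1 \<union> f C2"
  proof
    fix x assume "x \<in> (\<Union>d. f d)"
    then obtain d where "x \<in> f d" by blast
    then show "x \<in> f C1 \<union> f C2" by (cases d) auto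
  qed
qed blast

fun rk :: "event \<Rightarrow> nat" where
  "rk (P1,n) = 2*n" | "rk (P2,n) = 2*n+3"

lemma step_rk:
  assumes h: "1 \<le> h" and "(e,f) \<in> proc_succ (grid h D) \<union> (gE h C1 \<union> gE h C2)" shows "rk e < rk f"
  using assms(2)
proof
  assume "(e,f) \<in> proc_succ (grid h D)"
  then obtain p n where "e = (p,n)" "f = (p,n+1)" unfolding proc_succ_grid by blast
  then show ?thesis by (cases p) auto
next
  assume "(e,f) \<in> gE h C1 \<union> gE h C2"
  then consider n where "e = (P1,n)" "f = (P2,n-1)" "2 \<le> n" | n where "e = (P2,n)" "f = (P1,n+8*h-1)"
    unfolding gE_def by fastforce
  then show ?thesis
  proof cases
    case 1 then show ?thesis by simp
  next
    case 2 then show ?thesis using h by simp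
  qed
qed

lemma less_rk:
  assumes h: "1 \<le> h" and "(e,f) \<in> cbm_less (grid h D)" shows "rk e < rk f"
  using assms(2) unfolding cbm_less_def edges_grid UN_ds
proof (induction rule: trancl_induct)
  case (base y)
  then show ?case using step_rk[OF h] by blast
next
  case (step y z)
  then show ?case using step_rk[OF h, of y z D] by linarith
qed

lemma proc_less:
  assumes "1 \<le> n1" "n1 < n2" "n2 \<le> gL h"
  shows "((p,n1),(p,n2)) \<in> cbm_less (grid h D)"
  using assms
proof (induction n2)
  case 0 then show ?case by simp
next
  case (Suc n)
  have st: "((p,n),(p,Suc n)) \<in> proc_succ (grid h D)" using Suc.prems by (auto simp: proc_succ_grid)
  show ?case
  proof (cases "n1 = n")
    case True then show ?thesis using st by (auto simp: cbm_less_def)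
  next
    case False
    then have "((p,n1),(p,n)) \<in> cbm_less (grid h D)" using Suc by auto
    then show ?thesis using st unfolding cbm_less_def by (meson UnI1 trancl.trancl_into_trancl)
  qed
qed


lemma gE_C1: "(e,f) \<in> gE h C1 \<longleftrightarrow> (\<exists>n. e = (P1,n) \<and> f = (P2,n-1) \<and> even n \<and> 2 \<le> n \<and> n \<le> gL h)"
  by (auto simp: gE_def)
lemma gE_C2: "(e,f) \<in> gE h C2 \<longleftrightarrow> (\<exists>n. e = (P2,n) \<and> f = (P1,n+8*h-1) \<and> even n \<and> 2 \<le> n \<and> n + 8*h \<le> gL h)"
  by (auto simp: gE_def)

lemma edges_sub:
  "edges (grid h D) d \<subseteq> events_of (grid h D) (writer d) \<times> events_of (grid h D) (reader d)"
  proof (cases d)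
    case C1 then show ?thesis by (auto simp: gE_C1 events_of_def events_grid)
  next
    case C2 then show ?thesis by (auto simp: gE_C2 events_of_def events_grid)
  qed

lemma par: assumes h: "1 \<le> h" and "(e,f) \<in> gE h d" shows "odd (snd f) \<and> even (snd e) \<and> fst e = writer d \<and> fst f = reader d \<and>
     (\<forall>f2. (e,f2) \<in> gE h d \<longrightarrow> f2 = f) \<and> (\<forall>e2. (e2,f) \<in> gE h d \<longrightarrow> e2 = e)"
  proof (cases d)
    case C1 then show ?thesis using assms by (auto simp: gE_C1)
  next
    case C2 then show ?thesis using assms by (auto simp: gE_C2)
  qed
lemma wr: "writer d = writer d' \<Longrightarrow> d = d'"
  by (cases d; cases d'; simp)
lemma rd: "reader d = reader d' \<Longrightarrow> d = d'"
  by (cases d; cases d'; simp)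

lemma dist_grid:
  assumes h: "1 \<le> h" and A: "(e, f) \<in> edges (grid h D) d \<and> (e', f') \<in> edges (grid h D) d' \<and> (d, e, f) \<noteq> (d', e', f')"
  shows "e \<noteq> e' \<and> e \<noteq> f' \<and> f \<noteq> e' \<and> f \<noteq> f'"
proof -
  have E: "(e,f) \<in> gE h d" "(e',f') \<in> gE h d'" using A by simp_all
  note p1 = par[OF h E(1)] and p2 = par[OF h E(2)]
  have w1: "fst e = writer d" "fst f = reader d" "odd (snd f)" "even (snd e)" using p1 by blast+
  have w2: "fst e' = writer d'" "fst f' = reader d'" "odd (snd f')" "even (snd e')" using p2 by blast+
  have u1: "\<And>f2. (e,f2) \<in> gE h d \<Longrightarrow> f2 = f" "\<And>e2. (e2,f) \<in> gE h d \<Longrightarrow> e2 = e" using p1 by blast+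
  have 1: "e \<noteq> e'"
  proof
    assume ee: "e = e'"
    then have dd: "d = d'" using wr w1 w2 by metis
    then have "f' = f" using u1 E ee by blast
    then show False using A dd ee by simp
  qed
  have 2: "f \<noteq> f'"
  proof
    assume ee: "f = f'"
    then have dd: "d = d'" using rd w1 w2 by metis
    then have "e' = e" using u1 E ee by blast
    then show False using A dd ee by simp
  qed
  have 3: "e \<noteq> f'" "f \<noteq> e'" using w1 w2 by auto
  show ?thesis using 1 2 3 by blast
qed

lemma fifo_grid:
  assumes h: "1 \<le> h" and A: "(e1, f1) \<in> edges (grid h D) d \<and> (e2, f2) \<in> edges (grid h D) d \<and> (e1, e2) \<in> cbm_less (grid h D)"
  shows "(f1, f2) \<in> cbm_less (grid h D)"
proof -
  have r: "rk e1 < rk e2" using A less_rk[OF h] by blast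
  show "(f1, f2) \<in> cbm_less (grid h D)"
  proof (cases d)
    case C1
    then obtain n1 n2 where "e1 = (P1,n1)" "f1 = (P2,n1-1)" "e2 = (P1,n2)" "f2 = (P2,n2-1)"
      "even n1" "2 \<le> n1" "even n2" "2 \<le> n2" "n2 \<le> gL h"
      using A unfolding C1 edges_grid gE_C1 by blast
    then show ?thesis using r proc_less[of "n1-1" "n2-1" h P2 D] by simp
  next
    case C2
    then obtain n1 n2 where "e1 = (P2,n1)" "f1 = (P1,n1+8*h-1)" "e2 = (P2,n2)" "f2 = (P1,n2+8*h-1)"
      "even n1" "2 \<le> n1" "even n2" "2 \<le> n2" "n2 + 8*h \<le> gL h"
      using A unfolding C2 edges_grid gE_C2 by blast
    then show ?thesis using r proc_less[of "n1+8*h-1" "n2+8*h-1" h P1 D] by simp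
  qed
qed

lemma irr_grid: "1 \<le> h \<Longrightarrow> (e, e) \<notin> cbm_less (grid h D)"
  using less_rk[of h e e D] by auto

lemma is_cbm_grid:
  assumes h: "1 \<le> h" shows "is_cbm (grid h D)"
  unfolding is_cbm_def
  using edges_sub[of h D] dist_grid[OF h] irr_grid[OF h] fifo_grid[OF h] by blast


definition rowOf :: "nat \<Rightarrow> event \<Rightarrow> nat" where
  "rowOf h e = 2*((snd e - 1) div (8*h)) + (if fst e = P1 then 0 else 1)"
definition colOf :: "nat \<Rightarrow> event \<Rightarrow> nat" where
  "colOf h e = ((snd e - 1) mod (8*h)) div 2"

lemma even_mod8: "even (a mod (8*h)) = even (a::nat)"
  using dvd_mod_iff[of 2 "8*h" a] by simp

lemma lblD_eq: assumes "1 \<le> n"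
  shows "lblD h D p n = (if odd n then (if ((n-1) mod (8*h)) div 2 = 0 then B else A)
     else (if rowOf h (p,n) = colOf h (p,n) then C else D (rowOf h (p,n)) (colOf h (p,n))))"
proof -
  have "even ((n-1) mod (8*h)) = odd n" using assms by (simp add: even_mod8)
  then show ?thesis unfolding lblD_def rowOf_def colOf_def Let_def by simp
qed

lemma lab_C:
  assumes "e \<in> events (grid h D)" "lab (grid h D) e = C" "\<And>r j. D r j \<noteq> C"
  shows "even (snd e) \<and> rowOf h e = colOf h e"
proof -
  obtain p n where e: "e = (p,n)" "1 \<le> n" "n \<le> gL h" using assms(1) by (auto simp: events_grid)
  show ?thesis using assms(2,3) e by (auto simp: lab_grid lblD_eq split: if_splits)
qed

lemma lab_AB:
  assumes "e \<in> events (grid h D)" "lab (grid h D) e \<noteq> C" "even (snd e)"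
  shows "rowOf h e \<noteq> colOf h e \<and> lab (grid h D) e = D (rowOf h e) (colOf h e)"
proof -
  obtain p n where e: "e = (p,n)" "1 \<le> n" "n \<le> gL h" using assms(1) by (auto simp: events_grid)
  show ?thesis using assms(2,3) e by (auto simp: lab_grid lblD_eq split: if_splits)
qed

lemma V_inv:
  assumes h: "1 \<le> h" and "(a,b) \<in> (relOn (grid h D) (RV (grid h D)))\<^sup>*"
  shows "a = b \<or> (even (snd a) \<and> even (snd b) \<and> (snd a - 1) mod (8*h) = (snd b - 1) mod (8*h))"
  using assms(2)
proof (induction rule: rtrancl_induct)
  case base then show ?case by simp
next
  case (step b c)
  then obtain m where m: "(b,m) \<in> gE h C1 \<or> (b,m) \<in> gE h C2" "(m,c) \<in> proc_succ (grid h D)"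
    by (auto simp: relOn_def RV_def)
  have "even (snd b) \<and> even (snd c) \<and> (snd b - 1) mod (8*h) = (snd c - 1) mod (8*h)"
    using m(1)
  proof
    assume "(b,m) \<in> gE h C1"
    then obtain n where "b = (P1,n)" "m = (P2,n-1)" "even n" "2 \<le> n" by (auto simp: gE_C1)
    then show ?thesis using m(2) by (auto simp: proc_succ_grid)
  next
    assume "(b,m) \<in> gE h C2"
    then obtain n where n: "b = (P2,n)" "m = (P1,n+8*h-1)" "even n" "2 \<le> n" by (auto simp: gE_C2)
    then have c: "c = (P1, n + 8*h)" using m(2) h by (auto simp: proc_succ_grid)
    have "(n + 8*h - 1) mod (8*h) = (n - 1) mod (8*h)"
      using n(4) by (metis Nat.add_diff_assoc2 le_trans one_le_numeral mod_add_self2)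
    then show ?thesis using n c by simp
  qed
  then show ?case using step.IH by auto
qed

lemma arith_H:
  fixes n W :: nat
  assumes "even n" "even W" "0 < W" "1 \<le> n" "n mod W \<noteq> 0"
  shows "(n+1) div W = (n-1) div W"
proof -
  define t r where "t = (n-1) div W" and "r = (n-1) mod W"
  have rW: "r < W" using assms(3) by (simp add: r_def)
  have nr: "n = W*t + r + 1" using assms(4) unfolding t_def r_def by simp
  have ev: "even (W*t)" using assms(2) by simp
  have "odd r" using nr ev assms(1) by simp
  have "r + 1 \<noteq> W"
  proof
    assume "r + 1 = W"
    then have "n = W*(t+1)" using nr by simp
    then show False using assms(5) by simp
  qed
  moreover have "r + 2 \<noteq> W" using \<open>odd r\<close> assms(2) by auto
  ultimately have "r + 2 < W" using rW by simp
  have "(n+1) div W = t"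
    by (rule div_nat_eqI) (use nr \<open>r + 2 < W\<close> in simp_all)
  then show ?thesis using t_def by simp
qed


lemma H_inv:
  assumes h: "1 \<le> h" and "(a,b) \<in> (relOn (grid h D) (RH (grid h D)))\<^sup>*"
  shows "fst a = fst b \<and> (even (snd a) = even (snd b)) \<and>
     (even (snd a) \<longrightarrow> (snd a - 1) div (8*h) = (snd b - 1) div (8*h))"
  using assms(2)
proof (induction rule: rtrancl_induct)
  case base then show ?case by simp
next
  case (step b c)
  then obtain m where m: "(b,m) \<in> proc_succ (grid h D)" "(m,c) \<in> proc_succ (grid h D)"
      "lab (grid h D) m \<noteq> B"
    by (auto simp: relOn_def RH_def)
  obtain p n where b: "b = (p,n)" "m = (p,n+1)" "c = (p,n+2)" "1 \<le> n" "n+2 \<le> gL h"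
    using m(1,2) unfolding proc_succ_grid by auto
  have l: "lab (grid h D) m = lblD h D p (n+1)" using b by (simp add: lab_grid)
  have "even n \<longrightarrow> (n+1) div (8*h) = (n-1) div (8*h)"
  proof
    assume en: "even n"
    then have "odd (n+1)" by simp
    then have "lblD h D p (n+1) = (if (n mod (8*h)) div 2 = 0 then B else A)"
      using lblD_eq[of "n+1" h D p] by simp
    then have "n mod (8*h) div 2 \<noteq> 0" using m(3) l by (auto split: if_splits)
    then have "n mod (8*h) \<noteq> 0" by (metis div_0)
    then show "(n+1) div (8*h) = (n-1) div (8*h)"
      using arith_H[of n "8*h"] en h b(4) by simp
  qed
  then show ?case using step.IH b by auto
qed

lemma phi_sym:
  assumes h: "1 \<le> h" and DC: "\<And>r j. D r j \<noteq> C" and Ds: "\<And>r j. D r j = D j r"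
  shows "sat (grid h D) \<nu> \<mu> phi"
proof -
  let ?G = "grid h D"
  have False if
    ev: "x \<in> events ?G" "y \<in> events ?G" "z \<in> events ?G" "z' \<in> events ?G" and
    lx: "lab ?G x = A \<or> lab ?G x = B" and ly: "lab ?G y = A \<or> lab ?G y = B" and
    lz: "lab ?G z = C" and lz': "lab ?G z' = C" and
    c1: "(x,z) \<in> (relOn ?G (RV ?G))\<^sup>* \<or> (z,x) \<in> (relOn ?G (RV ?G))\<^sup>*" and
    c2: "(y,z) \<in> (relOn ?G (RH ?G))\<^sup>* \<or> (z,y) \<in> (relOn ?G (RH ?G))\<^sup>*" and
    c3: "(y,z') \<in> (relOn ?G (RV ?G))\<^sup>* \<or> (z',y) \<in> (relOn ?G (RV ?G))\<^sup>*" and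
    c4: "(x,z') \<in> (relOn ?G (RH ?G))\<^sup>* \<or> (z',x) \<in> (relOn ?G (RH ?G))\<^sup>*" and
    neq: "\<not> (lab ?G x = A \<longleftrightarrow> lab ?G y = A)" for x y z z'
  proof -
    have xz: "x \<noteq> z" "y \<noteq> z" "x \<noteq> z'" "y \<noteq> z'" using lx ly lz lz' by auto
    have z: "even (snd z)" "rowOf h z = colOf h z" using lab_C[OF ev(3) lz DC] by auto
    have z': "even (snd z')" "rowOf h z' = colOf h z'" using lab_C[OF ev(4) lz' DC] by auto
    have 1: "even (snd x) \<and> (snd x - 1) mod (8*h) = (snd z - 1) mod (8*h)"
      using c1 V_inv[OF h, of x z D] V_inv[OF h, of z x D] xz by auto
    have 2: "fst y = fst z \<and> even (snd y) \<and> (snd y - 1) div (8*h) = (snd z - 1) div (8*h)"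
      using c2 H_inv[OF h, of y z D] H_inv[OF h, of z y D] z by auto
    have 3: "even (snd y) \<and> (snd y - 1) mod (8*h) = (snd z' - 1) mod (8*h)"
      using c3 V_inv[OF h, of y z' D] V_inv[OF h, of z' y D] xz by auto
    have 4: "fst x = fst z' \<and> even (snd x) \<and> (snd x - 1) div (8*h) = (snd z' - 1) div (8*h)"
      using c4 H_inv[OF h, of x z' D] H_inv[OF h, of z' x D] z' by auto
    have cx: "colOf h x = colOf h z" using 1 by (simp add: colOf_def)
    have ry: "rowOf h y = rowOf h z" using 2 by (simp add: rowOf_def)
    have cy: "colOf h y = colOf h z'" using 3 by (simp add: colOf_def)
    have rx: "rowOf h x = rowOf h z'" using 4 by (simp add: rowOf_def)
    have lx': "lab ?G x = D (rowOf h x) (colOf h x)" using lab_AB[OF ev(1)] lx 1 by auto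
    have ly': "lab ?G y = D (rowOf h y) (colOf h y)" using lab_AB[OF ev(2)] ly 2 by auto
    have "lab ?G x = lab ?G y" using lx' ly' cx ry cy rx z z' Ds by metis
    then show False using neq by simp
  qed
  then show ?thesis unfolding sat_phi by blast
qed


definition cell :: "nat \<Rightarrow> nat \<Rightarrow> nat \<Rightarrow> event" where
  "cell h r j = (if even r then P1 else P2, (r div 2)*(8*h) + 2*j + 2)"

lemma cell_bound:
  assumes "r < 4*h" "j < 4*h"
  shows "(r div 2)*(8*h) + 2*j + 2 \<le> gL h"
proof -
  have "r div 2 + 1 \<le> 2*h" using assms(1) by linarith
  then have "(r div 2 + 1)*(8*h) \<le> (2*h)*(8*h)" by (rule mult_le_mono1)
  moreover have "2*j+2 \<le> 8*h" using assms(2) by linarith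
  ultimately show ?thesis unfolding gL_def by (simp add: algebra_simps)
qed

lemma cell_ev: "r < 4*h \<Longrightarrow> j < 4*h \<Longrightarrow> cell h r j \<in> events (grid h D)"
  using cell_bound[of r h j] by (simp add: cell_def events_grid)

lemma cell_coords:
  assumes "j < 4*h"
  shows "rowOf h (cell h r j) = r \<and> colOf h (cell h r j) = j \<and> even (snd (cell h r j))"
proof -
  have n1: "snd (cell h r j) - 1 = (r div 2)*(8*h) + (2*j+1)" by (simp add: cell_def)
  have lt: "2*j+1 < 8*h" using assms by linarith
  have d: "(snd (cell h r j) - 1) div (8*h) = r div 2" unfolding n1 using lt
    by (metis add.commute div_mult_self1 div_less add_0 less_nat_zero_code mult_is_0 neq0_conv)
  have m: "(snd (cell h r j) - 1) mod (8*h) = 2*j+1" unfolding n1 using lt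
    by (metis add.commute mod_less mod_mult_self1)
  show ?thesis using d m unfolding rowOf_def colOf_def by (auto simp: cell_def)
qed

lemma cell_lab:
  assumes "r < 4*h" "j < 4*h"
  shows "lab (grid h D) (cell h r j) = (if r = j then C else D r j)"
proof -
  have ev: "cell h r j \<in> events (grid h D)" using cell_ev assms by blast
  obtain p n where pn: "cell h r j = (p,n)" by (cases "cell h r j")
  have "1 \<le> n" "n \<le> gL h" using ev pn by (auto simp: events_grid)
  then have "lab (grid h D) (cell h r j) = lblD h D p n" using pn by (simp add: lab_grid)
  also have "\<dots> = (if r = j then C else D r j)"
    using lblD_eq[OF \<open>1 \<le> n\<close>, of h D p] cell_coords[OF assms(2), of r] pn by simp
  finally show ?thesis .
qed


lemma V_step:
  assumes h: "1 \<le> h" and r: "r + 1 < 4*h" and j: "j < 4*h"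
  shows "(cell h r j, cell h (r+1) j) \<in> relOn (grid h D) (RV (grid h D))"
proof -
  let ?n = "(r div 2)*(8*h) + 2*j + 2"
  have ev1: "cell h r j \<in> events (grid h D)" "cell h (r+1) j \<in> events (grid h D)"
    using cell_ev r j by auto
  have bnd: "?n \<le> gL h" using cell_bound[of r h j] r j by simp
  show ?thesis
  proof (cases "even r")
    case True
    then have c1: "cell h r j = (P1, ?n)" and c2: "cell h (r+1) j = (P2, ?n)"
      by (auto simp: cell_def)
    have m: "(P2, ?n - 1) \<in> events (grid h D)" using bnd by (simp add: events_grid)
    have e: "((P1, ?n), (P2, ?n - 1)) \<in> gE h C1" using bnd by (simp add: gE_C1)
    have s: "((P2, ?n - 1), (P2, ?n)) \<in> proc_succ (grid h D)" using bnd
      unfolding proc_succ_grid by force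
    show ?thesis unfolding relOn_def RV_def using ev1 m e s c1 c2 by auto
  next
    case False
    then have rr: "(r+1) div 2 = r div 2 + 1" by presburger
    have c1: "cell h r j = (P2, ?n)" using False by (simp add: cell_def)
    have c2: "cell h (r+1) j = (P1, ?n + 8*h)" using False rr by (simp add: cell_def add_mult_distrib)
    have bnd2: "?n + 8*h \<le> gL h" using cell_bound[of "r+1" h j] r j rr by (simp add: add_mult_distrib)
    have m: "(P1, ?n + 8*h - 1) \<in> events (grid h D)" using bnd2 by (simp add: events_grid)
    have e: "((P2, ?n), (P1, ?n + 8*h - 1)) \<in> gE h C2" using bnd2 unfolding gE_C2 by (intro exI[of _ ?n]) simp
    have s: "((P1, ?n + 8*h - 1), (P1, ?n + 8*h)) \<in> proc_succ (grid h D)" using bnd2 h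
      unfolding proc_succ_grid by force
    show ?thesis unfolding relOn_def RV_def using ev1 m e s c1 c2 by auto
  qed
qed

lemma H_step:
  assumes h: "1 \<le> h" and r: "r < 4*h" and j: "j + 1 < 4*h"
  shows "(cell h r j, cell h r (j+1)) \<in> relOn (grid h D) (RH (grid h D))"
proof -
  let ?n = "(r div 2)*(8*h) + 2*j + 2"
  let ?p = "if even r then P1 else P2"
  have ev1: "cell h r j \<in> events (grid h D)" "cell h r (j+1) \<in> events (grid h D)"
    using cell_ev r j by auto
  have bnd: "?n + 2 \<le> gL h" using cell_bound[of r h "j+1"] r j by simp
  have c1: "cell h r j = (?p, ?n)" and c2: "cell h r (j+1) = (?p, ?n + 2)" by (auto simp: cell_def)
  have m: "(?p, ?n + 1) \<in> events (grid h D)" using bnd by (simp add: events_grid)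
  have s1: "((?p, ?n), (?p, ?n+1)) \<in> proc_succ (grid h D)" using bnd unfolding proc_succ_grid by force
  have s2: "((?p, ?n+1), (?p, ?n+2)) \<in> proc_succ (grid h D)" using bnd unfolding proc_succ_grid by force
  have lt: "2*j+2 < 8*h" using j by linarith
  have md: "?n mod (8*h) = 2*j+2" using lt
    by (metis add.assoc add.commute mod_less mod_mult_self1)
  have "lab (grid h D) (?p, ?n+1) = lblD h D ?p (?n+1)" using bnd by (simp add: lab_grid)
  also have "\<dots> = A" using lblD_eq[of "?n+1" h D ?p] md by simp
  finally have "lab (grid h D) (?p, ?n+1) \<noteq> B" by simp
  then show ?thesis unfolding relOn_def RH_def using ev1 m s1 s2 c1 c2 by auto
qed

lemma V_chain:
  assumes h: "1 \<le> h" and "r + k < 4*h" "j < 4*h"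
  shows "(cell h r j, cell h (r+k) j) \<in> (relOn (grid h D) (RV (grid h D)))\<^sup>*"
  using assms(2)
proof (induction k)
  case 0 then show ?case by simp
next
  case (Suc k)
  then have "(cell h r j, cell h (r+k) j) \<in> (relOn (grid h D) (RV (grid h D)))\<^sup>*" by simp
  moreover have "(cell h (r+k) j, cell h (r+k+1) j) \<in> relOn (grid h D) (RV (grid h D))"
    using V_step[OF h, of "r+k" j D] Suc.prems assms(3) by simp
  ultimately show ?case by simp
qed

lemma H_chain:
  assumes h: "1 \<le> h" and "r < 4*h" "j + k < 4*h"
  shows "(cell h r j, cell h r (j+k)) \<in> (relOn (grid h D) (RH (grid h D)))\<^sup>*"
  using assms(3)
proof (induction k)
  case 0 then show ?case by simp
next
  case (Suc k)
  then have "(cell h r j, cell h r (j+k)) \<in> (relOn (grid h D) (RH (grid h D)))\<^sup>*" by simp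
  moreover have "(cell h r (j+k), cell h r (j+k+1)) \<in> relOn (grid h D) (RH (grid h D))"
    using H_step[OF h, of r "j+k" D] Suc.prems assms(2) by simp
  ultimately show ?case by simp
qed

lemma phi_viol:
  assumes h: "1 \<le> h" and ij: "i < j" "j < 4*h" and AB: "D i j \<in> {A,B}" "D j i \<in> {A,B}"
    and ne: "D i j \<noteq> D j i"
  shows "\<not> sat (grid h D) \<nu> \<mu> phi"
proof -
  let ?G = "grid h D"
  have i4: "i < 4*h" using ij by simp
  define x y z z' where "x = cell h i j" "y = cell h j i" "z = cell h j j" "z' = cell h i i"
  have ev: "x \<in> events ?G" "y \<in> events ?G" "z \<in> events ?G" "z' \<in> events ?G"
    unfolding x_y_z_z'_def using cell_ev ij i4 by auto
  have lx: "lab ?G x = D i j" "lab ?G y = D j i" "lab ?G z = C" "lab ?G z' = C"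
    unfolding x_y_z_z'_def using cell_lab ij i4 by auto
  obtain k where k: "j = i + k" using ij by (metis less_imp_add_positive)
  have c1: "(x,z) \<in> (relOn ?G (RV ?G))\<^sup>*" unfolding x_y_z_z'_def using V_chain[OF h, of i k j D] k ij by simp
  have c2: "(y,z) \<in> (relOn ?G (RH ?G))\<^sup>*" unfolding x_y_z_z'_def using H_chain[OF h, of j i k D] k ij by simp
  have c3: "(z',y) \<in> (relOn ?G (RV ?G))\<^sup>*" unfolding x_y_z_z'_def using V_chain[OF h, of i k i D] k ij by simp
  have c4: "(z',x) \<in> (relOn ?G (RH ?G))\<^sup>*" unfolding x_y_z_z'_def using H_chain[OF h, of i i k D] k ij by simp
  have "\<not> (lab ?G x = A \<longleftrightarrow> lab ?G y = A)" using lx AB ne by auto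
  moreover have "lab ?G x = A \<or> lab ?G x = B" "lab ?G y = A \<or> lab ?G y = B" using lx AB by auto
  ultimately have body: "(lab ?G x = A \<or> lab ?G x = B) \<and> (lab ?G y = A \<or> lab ?G y = B) \<and> lab ?G z = C \<and> lab ?G z' = C \<and>
   ((x,z) \<in> (relOn ?G (RV ?G))\<^sup>* \<or> (z,x) \<in> (relOn ?G (RV ?G))\<^sup>*) \<and>
   ((y,z) \<in> (relOn ?G (RH ?G))\<^sup>* \<or> (z,y) \<in> (relOn ?G (RH ?G))\<^sup>*) \<and>
   ((y,z') \<in> (relOn ?G (RV ?G))\<^sup>* \<or> (z',y) \<in> (relOn ?G (RV ?G))\<^sup>*) \<and>
   ((x,z') \<in> (relOn ?G (RH ?G))\<^sup>* \<or> (z',x) \<in> (relOn ?G (RH ?G))\<^sup>*) \<and>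
   \<not> (lab ?G x = A \<longleftrightarrow> lab ?G y = A)"
    using lx c1 c2 c3 c4 by blast
  show ?thesis unfolding sat_phi not_not using ev(1-4) body by blast
qed


definition mix :: "nat \<Rightarrow> (nat \<Rightarrow> nat \<Rightarrow> sym) \<Rightarrow> (nat \<Rightarrow> nat \<Rightarrow> sym) \<Rightarrow> nat \<Rightarrow> nat \<Rightarrow> sym" where
  "mix h D1 D2 r j = (if r < 2*h then D1 r j else D2 r j)"

lemma row_cut:
  assumes h: "1 \<le> h" and n: "1 \<le> n"
  shows "rowOf h (p,n) < 2*h \<longleftrightarrow> n \<le> h*(8*h)"
proof -
  have "(n-1) div (8*h) < h \<longleftrightarrow> n - 1 < h*(8*h)" using h div_less_iff_less_mult[of "8*h" "n-1" h] by simp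
  then show ?thesis unfolding rowOf_def using n by auto
qed

lemma lab_mix:
  assumes h: "1 \<le> h" and e: "e \<in> events (grid h (mix h D1 D2))"
  shows "lab (grid h (mix h D1 D2)) e = (if snd e \<le> h*(8*h) then lab (grid h D1) e else lab (grid h D2) e)"
proof -
  obtain p n where pn: "e = (p,n)" "1 \<le> n" "n \<le> gL h" using e by (auto simp: events_grid)
  have rc: "rowOf h (p,n) < 2*h \<longleftrightarrow> n \<le> h*(8*h)" using row_cut[OF h pn(2)] .
  show ?thesis using pn rc by (simp add: lab_grid lblD_eq[OF pn(2)] mix_def)
qed

definition valof :: "cpds \<Rightarrow> nat \<Rightarrow> (nat \<Rightarrow> nat \<Rightarrow> sym) \<Rightarrow> (event \<Rightarrow> nat) \<Rightarrow> nat \<Rightarrow> nat" where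
  "valof S h D \<rho> n = (SOME v. v \<in> vals S \<and> (((P2,n),(P1,n+8*h-1)) \<in> gE h C2 \<longrightarrow>
     (pre_loc S \<rho> (P2,n), lab (grid h D) (P2,n), Send C2 v, \<rho> (P2,n)) \<in> trans S P2 \<and>
     (pre_loc S \<rho> (P1,n+8*h-1), lab (grid h D) (P1,n+8*h-1), Recv C2 v, \<rho> (P1,n+8*h-1)) \<in> trans S P1))"

lemma valof_spec:
  assumes S: "is_cpds S" and r: "is_run S (grid h D) \<rho>"
  shows "valof S h D \<rho> n \<in> vals S \<and> (((P2,n),(P1,n+8*h-1)) \<in> gE h C2 \<longrightarrow>
     (pre_loc S \<rho> (P2,n), lab (grid h D) (P2,n), Send C2 (valof S h D \<rho> n), \<rho> (P2,n)) \<in> trans S P2 \<and>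
     (pre_loc S \<rho> (P1,n+8*h-1), lab (grid h D) (P1,n+8*h-1), Recv C2 (valof S h D \<rho> n), \<rho> (P1,n+8*h-1)) \<in> trans S P1)"
proof -
  have "\<exists>v. v \<in> vals S \<and> (((P2,n),(P1,n+8*h-1)) \<in> gE h C2 \<longrightarrow>
     (pre_loc S \<rho> (P2,n), lab (grid h D) (P2,n), Send C2 v, \<rho> (P2,n)) \<in> trans S P2 \<and>
     (pre_loc S \<rho> (P1,n+8*h-1), lab (grid h D) (P1,n+8*h-1), Recv C2 v, \<rho> (P1,n+8*h-1)) \<in> trans S P1)"
  proof (cases "((P2,n),(P1,n+8*h-1)) \<in> gE h C2")
    case True
    then obtain v where v: "(pre_loc S \<rho> (P2,n), lab (grid h D) (P2,n), Send C2 v, \<rho> (P2,n)) \<in> trans S P2"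
      "(pre_loc S \<rho> (P1,n+8*h-1), lab (grid h D) (P1,n+8*h-1), Recv C2 v, \<rho> (P1,n+8*h-1)) \<in> trans S P1"
      using r unfolding is_run_def edges_grid by fastforce
    have "v \<in> vals S" using S v(1) unfolding is_cpds_def by blast
    then show ?thesis using v by blast
  next
    case False
    obtain v where "v \<in> vals S" using S unfolding is_cpds_def by blast
    then show ?thesis using False by blast
  qed
  then show ?thesis unfolding valof_def by (rule someI_ex)
qed


lemma pre_loc_mix:
  assumes K: "1 \<le> K" and st: "\<And>p. \<rho>1 (p,K) = \<rho>2 (p,K)"
  shows "pre_loc S (\<lambda>e. if snd e \<le> K then \<rho>1 e else \<rho>2 e) e =
         (if snd e \<le> K then pre_loc S \<rho>1 e else pre_loc S \<rho>2 e)"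
proof (cases "snd e = 1")
  case True then show ?thesis using K by (simp add: pre_loc_def)
next
  case False
  show ?thesis
  proof (cases "snd e \<le> K")
    case True
    then have "snd e - 1 \<le> K" by simp
    then show ?thesis using False True by (simp add: pre_loc_def)
  next
    case F2: False
    show ?thesis
    proof (cases "snd e - 1 \<le> K")
      case True
      then have "snd e - 1 = K" using F2 by simp
      then show ?thesis using F2 False st[of "fst e"] by (simp add: pre_loc_def)
    next
      case F3: False then show ?thesis using F2 False by (simp add: pre_loc_def)
    qed
  qed
qed

lemma gL_pos: "1 \<le> h \<Longrightarrow> h*(8*h) < gL h"
  unfolding gL_def by simp

lemma swap_run:
  assumes S: "is_cpds S" and h: "1 \<le> h"
    and r1: "is_run S (grid h D1) \<rho>1" and r2: "is_run S (grid h D2) \<rho>2"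
    and a2: "accepting S (grid h D2) \<rho>2"
    and st: "\<And>p. \<rho>1 (p, h*(8*h)) = \<rho>2 (p, h*(8*h))"
    and vv: "\<And>n. (h-1)*(8*h) < n \<Longrightarrow> n \<le> h*(8*h) \<Longrightarrow> valof S h D1 \<rho>1 n = valof S h D2 \<rho>2 n"
  shows "is_run S (grid h (mix h D1 D2)) (\<lambda>e. if snd e \<le> h*(8*h) then \<rho>1 e else \<rho>2 e) \<and>
         accepting S (grid h (mix h D1 D2)) (\<lambda>e. if snd e \<le> h*(8*h) then \<rho>1 e else \<rho>2 e)"
proof -
  define K where "K = h*(8*h)"
  define \<rho> where "\<rho> = (\<lambda>e. if snd e \<le> K then \<rho>1 e else \<rho>2 e)"
  let ?M = "grid h (mix h D1 D2)"
  have K1: "1 \<le> K" using h unfolding K_def by simp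
  have evs: "events ?M = events (grid h D1)" "events ?M = events (grid h D2)" by (simp_all add: events_grid)
  have pl: "pre_loc S \<rho> e = (if snd e \<le> K then pre_loc S \<rho>1 e else pre_loc S \<rho>2 e)" for e
    unfolding \<rho>_def using pre_loc_mix[OF K1, of \<rho>1 \<rho>2 S e] st unfolding K_def by blast
  have lb: "lab ?M e = (if snd e \<le> K then lab (grid h D1) e else lab (grid h D2) e)" if "e \<in> events ?M" for e
    using lab_mix[OF h that] unfolding K_def .
  have edge_ev: "e \<in> events ?M \<and> f \<in> events ?M" if "(e,f) \<in> gE h d" for e f d
    using edges_sub[of h "mix h D1 D2" d] that unfolding events_of_def by auto
  have run: "is_run S ?M \<rho>"
    unfolding is_run_def
  proof (intro conjI ballI allI impI)
    fix e assume "e \<in> events ?M"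
    then show "\<rho> e \<in> locs S" using r1 r2 evs unfolding is_run_def \<rho>_def by auto
  next
    fix e assume e: "e \<in> events ?M" and ne: "\<nexists>d f. (e, f) \<in> edges ?M d \<or> (f, e) \<in> edges ?M d"
    show "(pre_loc S \<rho> e, lab ?M e, Internal, \<rho> e) \<in> trans S (fst e)"
    proof (cases "snd e \<le> K")
      case True
      have "(pre_loc S \<rho>1 e, lab (grid h D1) e, Internal, \<rho>1 e) \<in> trans S (fst e)"
        using r1 e ne evs unfolding is_run_def by simp
      then show ?thesis using True pl lb[OF e] unfolding \<rho>_def by simp
    next
      case False
      have "(pre_loc S \<rho>2 e, lab (grid h D2) e, Internal, \<rho>2 e) \<in> trans S (fst e)"
        using r2 e ne evs unfolding is_run_def by simp
      then show ?thesis using False pl lb[OF e] unfolding \<rho>_def by simp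
    qed
  next
    fix d e f assume ef: "(e, f) \<in> edges ?M d"
    then have ef': "(e,f) \<in> gE h d" by simp
    have ee: "e \<in> events ?M" "f \<in> events ?M" using edge_ev[OF ef'] by auto
    have KK: "even K" unfolding K_def by simp
    show "\<exists>v. (pre_loc S \<rho> e, lab ?M e, Send d v, \<rho> e) \<in> trans S (fst e) \<and>
              (pre_loc S \<rho> f, lab ?M f, Recv d v, \<rho> f) \<in> trans S (fst f)"
    proof (cases "snd e \<le> K")
      case eK: True
      show ?thesis
      proof (cases "snd f \<le> K")
        case True
        obtain v where "(pre_loc S \<rho>1 e, lab (grid h D1) e, Send d v, \<rho>1 e) \<in> trans S (fst e)"
            "(pre_loc S \<rho>1 f, lab (grid h D1) f, Recv d v, \<rho>1 f) \<in> trans S (fst f)"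
          using r1 ef' unfolding is_run_def by fastforce
        then show ?thesis using eK True pl lb ee unfolding \<rho>_def by auto
      next
        case fK: False
        obtain n where n: "e = (P2,n)" "f = (P1,n+8*h-1)" "d = C2"
        proof (cases d)
          case C1
          then show ?thesis using ef' eK fK by (auto simp: gE_C1)
        next
          case C2
          then show ?thesis using ef' that by (auto simp: gE_C2)
        qed
        have hm: "(h-1)*(8*h) = h*(8*h) - 8*h" by (simp add: diff_mult_distrib)
        have X: "8*h \<le> h*(8*h)" using h by simp
        have a: "\<not> n + 8*h - 1 \<le> h*(8*h)" using fK n by (simp add: K_def)
        have nr1: "(h-1)*(8*h) < n" unfolding hm using a X h by linarith
        have nr: "(h-1)*(8*h) < n" "n \<le> K" using nr1 eK n by simp_all
        have vq: "valof S h D1 \<rho>1 n = valof S h D2 \<rho>2 n" using vv nr unfolding K_def by blast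
        have E2: "((P2,n),(P1,n+8*h-1)) \<in> gE h C2" using ef' n by simp
        have s1: "(pre_loc S \<rho>1 e, lab (grid h D1) e, Send C2 (valof S h D1 \<rho>1 n), \<rho>1 e) \<in> trans S P2"
          using valof_spec[OF S r1, of n] E2 n by simp
        have s2: "(pre_loc S \<rho>2 f, lab (grid h D2) f, Recv C2 (valof S h D2 \<rho>2 n), \<rho>2 f) \<in> trans S P1"
          using valof_spec[OF S r2, of n] E2 n by simp
        show ?thesis using s1 s2 vq eK fK pl lb ee n unfolding \<rho>_def by auto
      qed
    next
      case eK: False
      show ?thesis
      proof (cases "snd f \<le> K")
        case fK: True
        have False
        proof (cases d)
          case C1
          then obtain n where "e = (P1,n)" "f = (P2,n-1)" "even n" using ef' by (auto simp: gE_C1)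
          then show False using eK fK KK by (cases "n = K + 1") auto
        next
          case C2
          then show False using ef' eK fK h by (auto simp: gE_C2)
        qed
        then show ?thesis ..
      next
        case False
        obtain v where "(pre_loc S \<rho>2 e, lab (grid h D2) e, Send d v, \<rho>2 e) \<in> trans S (fst e)"
            "(pre_loc S \<rho>2 f, lab (grid h D2) f, Recv d v, \<rho>2 f) \<in> trans S (fst f)"
          using r2 ef' unfolding is_run_def by fastforce
        then show ?thesis using eK False pl lb ee unfolding \<rho>_def by auto
      qed
    qed
  qed
  have acc: "accepting S ?M \<rho>"
  proof -
    have ne: "words ?M p \<noteq> []" "words (grid h D2) p \<noteq> []" for p
      using gL_pos[OF h] by (auto simp: words_grid)
    have len: "length (words ?M p) = gL h" "length (words (grid h D2) p) = gL h" for p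
      by (simp_all add: words_grid)
    have "(\<lambda>p. if words ?M p = [] then init S else \<rho> (p, length (words ?M p))) =
          (\<lambda>p. if words (grid h D2) p = [] then init S else \<rho>2 (p, length (words (grid h D2) p)))"
      using ne len gL_pos[OF h] unfolding \<rho>_def K_def by auto
    then show ?thesis using a2 unfolding accepting_def by simp
  qed
  show ?thesis using run acc unfolding \<rho>_def K_def by simp
qed


definition DX :: "(nat \<times> nat) set \<Rightarrow> nat \<Rightarrow> nat \<Rightarrow> sym" where
  "DX X r j = (if (r,j) \<in> X \<or> (j,r) \<in> X then B else A)"

lemma ineq:
  fixes a b :: nat
  assumes "1 \<le> a" "1 \<le> b"
  shows "a*a*b^(8*(2*(a+b))) < 2^((2*(2*(a+b)))*(2*(2*(a+b))))"
proof -
  define h where "h = 2*(a+b)"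
  have h1: "1 \<le> h" using assms unfolding h_def by simp
  have f1: "a*a < 2^a*2^a" using less_exp[of a] by (simp add: mult_strict_mono)
  have f2: "b^(8*h) \<le> (2^b)^(8*h)" using less_exp[of b] by (simp add: power_mono)
  have f3: "(0::nat) < b^(8*h)" using assms by simp
  have "a*a*b^(8*h) < 2^a*2^a*(2^b)^(8*h)"
    by (rule mult_less_le_imp_less[OF f1 f2]) (simp_all only: zero_le f3)
  also have "\<dots> = 2^(a + a + b*(8*h))" by (simp only: power_add power_mult)
  also have "\<dots> \<le> 2^((2*h)*(2*h))"
  proof (rule power_increasing)
    have ah: "a \<le> h*a" using h1 by simp
    have "8*h*a = 8*(h*a)" by simp
    then have "a + a \<le> 8*h*a" using ah by linarith
    then have "a + a + b*(8*h) \<le> 8*h*a + b*(8*h)" by linarith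
    also have "\<dots> = (2*h)*(2*h)" unfolding h_def by (simp add: algebra_simps)
    finally show "a + a + b*(8*h) \<le> (2*h)*(2*h)" .
  qed simp
  finally show ?thesis unfolding h_def .
qed

lemma main_neq:
  assumes S: "is_cpds S" shows "lang_cpds S \<noteq> lang_mso phi"
proof
  assume eq: "lang_cpds S = lang_mso phi"
  define a where "a = card (locs S)"
  define b where "b = card (vals S)"
  have a1: "1 \<le> a" using S unfolding a_def is_cpds_def by (simp add: Suc_le_eq card_gt_0_iff)
  have b1: "1 \<le> b" using S unfolding b_def is_cpds_def by (simp add: Suc_le_eq card_gt_0_iff)
  define h where "h = 2*(a+b)"
  have h1: "1 \<le> h" using a1 unfolding h_def by simp
  define K where "K = h*(8*h)"
  define Pairs where "Pairs = {..<2*h} \<times> {2*h..<4*h}"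
  define Sc where "Sc = {(h-1)*(8*h)<..K}"
  have sym_in: "grid h (DX X) \<in> lang_cpds S" for X
  proof -
    have "sat (grid h (DX X)) \<nu> \<mu> phi" for \<nu> \<mu>
      by (rule phi_sym[OF h1]) (auto simp: DX_def)
    then have "grid h (DX X) \<in> lang_mso phi" using is_cbm_grid[OF h1] unfolding lang_mso_def by blast
    then show ?thesis using eq by simp
  qed
  define \<rho>X where "\<rho>X X = (SOME \<rho>. is_run S (grid h (DX X)) \<rho> \<and> accepting S (grid h (DX X)) \<rho>)" for X
  have runX: "is_run S (grid h (DX X)) (\<rho>X X) \<and> accepting S (grid h (DX X)) (\<rho>X X)" for X
  proof -
    have "\<exists>\<rho>. is_run S (grid h (DX X)) \<rho> \<and> accepting S (grid h (DX X)) \<rho>"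
      using sym_in[of X] unfolding lang_cpds_def by blast
    then show ?thesis unfolding \<rho>X_def by (rule someI_ex)
  qed
  define cfg where "cfg X = (\<rho>X X (P1,K), \<rho>X X (P2,K), restrict (\<lambda>n. valof S h (DX X) (\<rho>X X) n) Sc)" for X
  define T where "T = locs S \<times> locs S \<times> PiE Sc (\<lambda>_. vals S)"
  have Kev: "(p,K) \<in> events (grid h D)" for p D
    using gL_pos[OF h1] h1 unfolding K_def by (simp add: events_grid)
  have img: "cfg ` Pow Pairs \<subseteq> T"
  proof
    fix c assume "c \<in> cfg ` Pow Pairs"
    then obtain X where c: "c = cfg X" by blast
    have l: "\<rho>X X (p,K) \<in> locs S" for p using runX[of X] Kev unfolding is_run_def by blast
    have v: "valof S h (DX X) (\<rho>X X) n \<in> vals S" for n using valof_spec[OF S] runX by blast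
    show "c \<in> T" unfolding c cfg_def T_def using l v by auto
  qed
  have finT: "finite T" using S unfolding T_def is_cpds_def Sc_def by (simp add: finite_PiE)
  have cSc: "card Sc = 8*h" unfolding Sc_def K_def using h1 by (simp add: diff_mult_distrib)
  have cardT: "card T = a*a*b^(8*h)"
    unfolding T_def a_def b_def using S cSc unfolding is_cpds_def Sc_def
    by (simp add: card_cartesian_product card_PiE)
  have cardP: "card (Pow Pairs) = 2^((2*h)*(2*h))"
    unfolding Pairs_def by (simp add: card_Pow card_cartesian_product)
  have "\<not> inj_on cfg (Pow Pairs)"
  proof
    assume "inj_on cfg (Pow Pairs)"
    then have "card (Pow Pairs) \<le> card T" using card_inj_on_le img finT by blast
    then show False using ineq[OF a1 b1] cardT cardP unfolding h_def by simp
  qed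
  then obtain X1 X2 where X: "X1 \<subseteq> Pairs" "X2 \<subseteq> Pairs" "X1 \<noteq> X2" "cfg X1 = cfg X2"
    unfolding inj_on_def by blast
  obtain q where q: "q \<in> X1 - X2 \<or> q \<in> X2 - X1" using X(3) by blast
  obtain i j where qij: "q = (i,j)" by (cases q)
  have ij: "(i,j) \<in> Pairs" "((i,j) \<in> X1) \<noteq> ((i,j) \<in> X2)" using q qij X(1,2) by auto
  let ?D = "mix h (DX X1) (DX X2)"
  have st: "\<rho>X X1 (p, h*(8*h)) = \<rho>X X2 (p, h*(8*h))" for p
    using X(4) unfolding cfg_def K_def by (cases p) auto
  have vv: "valof S h (DX X1) (\<rho>X X1) n = valof S h (DX X2) (\<rho>X X2) n"
    if "(h-1)*(8*h) < n" "n \<le> h*(8*h)" for n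
  proof -
    have "n \<in> Sc" using that unfolding Sc_def K_def by simp
    moreover have "restrict (\<lambda>n. valof S h (DX X1) (\<rho>X X1) n) Sc = restrict (\<lambda>n. valof S h (DX X2) (\<rho>X X2) n) Sc"
      using X(4) unfolding cfg_def by simp
    ultimately show ?thesis by (metis restrict_apply')
  qed
  have sw: "is_run S (grid h ?D) (\<lambda>e. if snd e \<le> h*(8*h) then \<rho>X X1 e else \<rho>X X2 e) \<and>
         accepting S (grid h ?D) (\<lambda>e. if snd e \<le> h*(8*h) then \<rho>X X1 e else \<rho>X X2 e)"
    using swap_run[OF S h1, of "DX X1" "\<rho>X X1" "DX X2" "\<rho>X X2"] runX st vv by blast
  have "grid h ?D \<in> lang_cpds S" unfolding lang_cpds_def using is_cbm_grid[OF h1] sw by blast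
  then have sat: "sat (grid h ?D) \<nu> \<mu> phi" for \<nu> \<mu> using eq unfolding lang_mso_def by blast
  have ij2: "i < 2*h" "2*h \<le> j" "j < 4*h" using ij(1) unfolding Pairs_def by auto
  have nji: "(j,i) \<notin> X1" "(j,i) \<notin> X2" using X(1,2) ij2 unfolding Pairs_def by auto
  have d1: "?D i j = (if (i,j) \<in> X1 then B else A)" using ij2 nji by (simp add: mix_def DX_def)
  have d2: "?D j i = (if (i,j) \<in> X2 then B else A)" using ij2 nji by (simp add: mix_def DX_def)
  have "\<not> sat (grid h ?D) undefined undefined phi"
    by (rule phi_viol[OF h1, where i=i and j=j]) (use ij2 d1 d2 ij(2) in auto)
  then show False using sat by blast
qed

theorem mainTheorem2:
  shows "\<exists>\<phi>. sentence \<phi> \<and> (\<forall>S. is_cpds S \<longrightarrow> lang_cpds S \<noteq> lang_mso \<phi>)"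
  using sentence_phi main_neq by blast


end
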